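(* Let $d\ge1$, $R>0$, $m>d/2$ and $\gamma>0$. There exist $0<C<1$ depending only on $m,R,d$ and a set $F'_\gamma\subset\mathcal{W}_m$ of measure larger than $1-4\gamma$ such that if $V\in F'_\gamma$ then, for every $r\ge1$, $$|\Omega({\boldsymbol j})-b|\ge\frac{C^r\gamma}{N({\boldsymbol j})^{m+d+3}}$$ for every non-resonant ${\boldsymbol j}\in\mathcal{Z}^r$ and every $b\in\mathbb{Z}$.
   Context: $\mathcal{W}_m=\{V=\sum_{a\in\mathbb{Z}^d}v_ae^{ia\cdot x}: v'_a:=v_a(1+|a|)^m/R\in[-1/2,1/2]\ \forall a\}$ with the product probability measure (the $v'_a$ i.i.d. uniform on $[-1/2,1/2]$). Frequencies: $\omega_a=|a|^2+v_a$. $\mathcal{Z}=\mathbb{Z}^d\times\{\pm1\}$, $|(a,\delta)|=|a|$, $\overline{(a,\delta)}=(a,-\delta)$. For ${\boldsymbol j}=(j_1,\dots,j_r)\in\mathcal{Z}^r$, $j_i=(a_i,\delta_i)$: $\Omega({\boldsymbol j})=\sum_i\delta_i\omega_{a_i}$ and $N({\boldsymbol j})=\prod_{k=1}^r(1+|j_k|)$. ${\boldsymbol j}\in\mathcal{Z}^r$ is resonant if $r$ is even and ${\boldsymbol j}$ is, up to order, $(i_1,\dots,i_{r/2},\bar i_1,\dots,\bar i_{r/2})$ for some $i_1,\dots,i_{r/2}\in\mathcal{Z}$; otherwise non-resonant. *)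

theory Defs
  imports "HOL-Probability.Probability"
begin

text \<open>Lattice points a in Z^d are modelled as functions 'd \<Rightarrow> int with 'd a finite
  index type, d = CARD('d). The potential V is parametrised by the normalised
  coefficients v' : Z^d \<Rightarrow> real, v'_a \<in> [-1/2,1/2].\<close>

definition lnorm :: "('d::finite \<Rightarrow> int) \<Rightarrow> real" where
  "lnorm a = sqrt (\<Sum>i\<in>UNIV. (real_of_int (a i))\<^sup>2)"

definition Wmeasure :: "(('d::finite \<Rightarrow> int) \<Rightarrow> real) measure" where
  "Wmeasure = PiM UNIV (\<lambda>_. uniform_measure lborel {-1/2..1/2::real})"

definition Wset :: "(('d::finite \<Rightarrow> int) \<Rightarrow> real) set" where
  "Wset = {v'. \<forall>a. v' a \<in> {-1/2..1/2}}"

definition coeff :: "real \<Rightarrow> real \<Rightarrow> (('d::finite \<Rightarrow> int) \<Rightarrow> real) \<Rightarrow> ('d \<Rightarrow> int) \<Rightarrow> real" where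
  "coeff R m v' a = R * v' a / (1 + lnorm a) powr m"

definition freq :: "real \<Rightarrow> real \<Rightarrow> (('d::finite \<Rightarrow> int) \<Rightarrow> real) \<Rightarrow> ('d \<Rightarrow> int) \<Rightarrow> real" where
  "freq R m v' a = (lnorm a)\<^sup>2 + coeff R m v' a"

text \<open>Elements of Z = Z^d \<times> {\<plusminus>1}; the sign +1 is encoded as True, -1 as False.\<close>
type_synonym 'd zindex = "('d \<Rightarrow> int) \<times> bool"

definition sgnb :: "bool \<Rightarrow> real" where
  "sgnb \<delta> = (if \<delta> then 1 else -1)"

definition zbar :: "'d zindex \<Rightarrow> 'd zindex" where
  "zbar j = (fst j, \<not> snd j)"

definition Omega :: "real \<Rightarrow> real \<Rightarrow> (('d::finite \<Rightarrow> int) \<Rightarrow> real) \<Rightarrow> 'd zindex list \<Rightarrow> real" where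
  "Omega R m v' js = (\<Sum>j\<leftarrow>js. sgnb (snd j) * freq R m v' (fst j))"

definition Nfun :: "('d::finite) zindex list \<Rightarrow> real" where
  "Nfun js = (\<Prod>j\<leftarrow>js. 1 + lnorm (fst j))"

definition resonant :: "'d zindex list \<Rightarrow> bool" where
  "resonant js \<longleftrightarrow> even (length js) \<and>
     (\<exists>is. length is = length js div 2 \<and> mset js = mset (is @ map zbar is))"

end

theory Submission
  imports Defs
begin


lemma count_image_mset_inj':
  assumes "inj f" shows "count (image_mset f A) (f x) = count A x"
proof -
  have "f -` {f x} = {x}" using assms by (auto dest: injD)
  then show ?thesis by (auto simp: count_image_mset Int_insert_left not_in_iff)
qed

lemma nonres_pivot:
  assumes "\<not> resonant (js :: 'd::finite zindex list)"
  shows "\<exists>a. count (mset js) (a,True) \<noteq> count (mset js) (a,False)"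
proof (rule ccontr)
  assume H: "\<not> ?thesis"
  define ps where "ps = filter snd js"
  have img: "image_mset zbar (mset ps) = mset (filter (\<lambda>j. \<not> snd j) js)"
  proof (rule multiset_eqI)
    fix x :: "'d zindex"
    obtain a b where x: "x = (a,b)" by fastforce
    have inj: "inj zbar" unfolding zbar_def inj_def by auto
    have zz: "x = zbar (a, \<not> b)" using x by (simp add: zbar_def)
    have "count (image_mset zbar (mset ps)) x = count (mset ps) (a, \<not> b)"
      unfolding zz by (rule count_image_mset_inj'[OF inj])
    also have "\<dots> = count (mset (filter (\<lambda>j. \<not> snd j) js)) x"
      using H x by (cases b) (auto simp: ps_def mset_filter)
    finally show "count (image_mset zbar (mset ps)) x = count (mset (filter (\<lambda>j. \<not> snd j) js)) x" .
  qed
  have m: "mset js = mset (ps @ map zbar ps)"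
    using img union_filter_mset_complement[of snd "\<lambda>j. \<not> snd j" "mset js"] by (simp add: ps_def mset_filter)
  have "length js = 2 * length ps"
    using arg_cong[OF m, of size] by simp
  then have "resonant js"
    unfolding resonant_def using m by (intro conjI exI[of _ "ps"]) auto
  with assms show False by simp
qed

lemma lnorm_nonneg: "lnorm a \<ge> 0"
  unfolding lnorm_def by (simp add: sum_nonneg)

lemma lnorm_pos1: "1 + lnorm a > 0"
  using lnorm_nonneg[of a] by linarith

definition cnt :: "'d zindex list \<Rightarrow> ('d \<Rightarrow> int) \<Rightarrow> int" where
  "cnt js a = int (count (mset js) (a,True)) - int (count (mset js) (a,False))"

lemma Omega_Cons: "Omega R m v (j # js) = sgnb (snd j) * freq R m v (fst j) + Omega R m v js"
  by (simp add: Omega_def)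

lemma Omega_Nil: "Omega R m v [] = 0"
  by (simp add: Omega_def)

lemma Omega_upd:
  "Omega R m (x(a:=y)) js = Omega R m (x(a:=0)) js + of_int (cnt js a) * (R / (1 + lnorm a) powr m) * y"
proof (induction js)
  case Nil then show ?case by (simp add: Omega_Nil cnt_def)
next
  case (Cons j js)
  obtain b \<delta> where j: "j = (b,\<delta>)" by fastforce
  show ?case
    using Cons.IH
    by (cases "b = a"; cases \<delta>)
       (auto simp: Omega_Cons j cnt_def freq_def coeff_def sgnb_def algebra_simps)
qed

lemma Omega_cong:
  "(\<And>j. j \<in> set js \<Longrightarrow> v (fst j) = w (fst j)) \<Longrightarrow> Omega R m v js = Omega R m w js"
  by (induction js) (auto simp: Omega_Cons Omega_Nil freq_def coeff_def)



lemma oneD: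
  fixes c s \<epsilon> :: real
  assumes s: "s \<noteq> 0" and e: "0 < \<epsilon>" "\<epsilon> \<le> 1"
  shows "emeasure lborel ({y. \<exists>b::int. \<bar>c + s*y - b\<bar> < \<epsilon>} \<inter> {-1/2..1/2})
          \<le> ennreal (2*\<epsilon>*(\<bar>s\<bar>+3)/\<bar>s\<bar>)"
proof -
  define lo where "lo = c - \<bar>s\<bar>/2 - \<epsilon>"
  define hi where "hi = c + \<bar>s\<bar>/2 + \<epsilon>"
  define BB where "BB = {\<lceil>lo\<rceil>..\<lfloor>hi\<rfloor>}"
  define I where "I = (\<lambda>b::int. {(b-c)/s - \<epsilon>/\<bar>s\<bar> <..< (b-c)/s + \<epsilon>/\<bar>s\<bar>})"
  have sub: "{y. \<exists>b::int. \<bar>c + s*y - b\<bar> < \<epsilon>} \<inter> {-1/2..1/2} \<subseteq> (\<Union>b\<in>BB. I b)"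
  proof
    fix y assume "y \<in> {y. \<exists>b::int. \<bar>c + s*y - b\<bar> < \<epsilon>} \<inter> {-1/2..1/2}"
    then obtain b :: int where b: "\<bar>c + s*y - b\<bar> < \<epsilon>" and y: "\<bar>y\<bar> \<le> 1/2" by auto
    have sy: "\<bar>s*y\<bar> \<le> \<bar>s\<bar>/2" using y mult_left_mono[of "\<bar>y\<bar>" "1/2" "\<bar>s\<bar>"] by (simp add: abs_mult)
    have "lo < b" "b < hi" using b sy unfolding lo_def hi_def by auto
    then have "b \<in> BB" unfolding BB_def by (auto intro: ceiling_le le_floor_iff[THEN iffD2])
    moreover have "\<bar>y - (b-c)/s\<bar> < \<epsilon>/\<bar>s\<bar>"
    proof -
      have "y - (b-c)/s = (c + s*y - b)/s" using s by (simp add: field_simps)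
      then have "\<bar>y - (b-c)/s\<bar> = \<bar>c + s*y - b\<bar>/\<bar>s\<bar>" by (simp add: abs_divide)
      then show ?thesis using b s by (simp add: divide_strict_right_mono)
    qed
    ultimately show "y \<in> (\<Union>b\<in>BB. I b)" unfolding I_def by (intro UN_I[of b]) (auto simp: abs_less_iff)
  qed
  have fin: "finite BB" unfolding BB_def by simp
  have "emeasure lborel ({y. \<exists>b::int. \<bar>c + s*y - b\<bar> < \<epsilon>} \<inter> {-1/2..1/2}) \<le> emeasure lborel (\<Union>b\<in>BB. I b)"
    using sub by (intro emeasure_mono) (auto simp: I_def)
  also have "\<dots> \<le> (\<Sum>b\<in>BB. emeasure lborel (I b))"
    using fin by (intro emeasure_subadditive_finite) (auto simp: I_def)
  also have "\<dots> = (\<Sum>b\<in>BB. ennreal (2*\<epsilon>/\<bar>s\<bar>))"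
    using e s by (intro sum.cong) (auto simp: I_def)
  also have "\<dots> = ennreal (real (card BB) * (2*\<epsilon>/\<bar>s\<bar>))"
    using e by (simp add: ennreal_of_nat_eq_real_of_nat ennreal_mult'[symmetric])
  also have "\<dots> \<le> ennreal (2*\<epsilon>*(\<bar>s\<bar>+3)/\<bar>s\<bar>)"
  proof (rule ennreal_leI)
    have "real (card BB) = real (nat (\<lfloor>hi\<rfloor> - \<lceil>lo\<rceil> + 1))" unfolding BB_def by simp
    also have "\<dots> \<le> \<bar>s\<bar> + 3"
    proof -
      have "real_of_int (\<lfloor>hi\<rfloor> - \<lceil>lo\<rceil> + 1) \<le> hi - lo + 1"
        using of_int_floor_le[of hi] le_of_int_ceiling[of lo] by linarith
      also have "\<dots> \<le> \<bar>s\<bar> + 3" using e unfolding hi_def lo_def by simp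
      finally show ?thesis by (cases "0 \<le> \<lfloor>hi\<rfloor> - \<lceil>lo\<rceil> + 1") auto
    qed
    finally have "real (card BB) \<le> \<bar>s\<bar> + 3" .
    then have "real (card BB) * (2*\<epsilon>/\<bar>s\<bar>) \<le> (\<bar>s\<bar> + 3) * (2*\<epsilon>/\<bar>s\<bar>)"
      using e s by (intro mult_right_mono) auto
    then show "real (card BB) * (2*\<epsilon>/\<bar>s\<bar>) \<le> 2*\<epsilon>*(\<bar>s\<bar>+3)/\<bar>s\<bar>" by (simp add: field_simps)
  qed
  finally show ?thesis .
qed



abbreviation U :: "real measure" where "U \<equiv> uniform_measure lborel {-1/2..1/2::real}"

lemma prob_U: "prob_space U"
  by (rule prob_space_uniform_measure) auto

lemma sets_U[measurable_cong]: "sets U = sets borel" by simp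

lemma Omega_meas:
  fixes js :: "'d::finite zindex list"
  assumes "fst ` set js \<subseteq> J"
  shows "(\<lambda>x. Omega R m x js) \<in> borel_measurable (PiM J (\<lambda>_. U))"
  using assms
proof (induction js)
  case Nil then show ?case by (simp add: Omega_Nil)
next
  case (Cons j js)
  then have jJ: "fst j \<in> J" and IH: "(\<lambda>x. Omega R m x js) \<in> borel_measurable (PiM J (\<lambda>_. U))" by auto
  have c: "(\<lambda>x. x (fst j)) \<in> borel_measurable (PiM J (\<lambda>_. U))"
    using measurable_component_singleton[OF jJ, of "\<lambda>_. U"] by (simp add: measurable_def)
  show ?case unfolding Omega_Cons freq_def coeff_def
    using c IH by measurable
qed



lemma Wmeasure_eq: "(Wmeasure :: (('d::finite \<Rightarrow> int) \<Rightarrow> real) measure) = PiM UNIV (\<lambda>_. U)"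
  by (simp add: Wmeasure_def)

lemma bad_bound:
  fixes js :: "'d::finite zindex list" and R m \<epsilon> :: real
  assumes c0: "cnt js a \<noteq> 0" and R: "R > 0" and e: "0 < \<epsilon>" "\<epsilon> \<le> 1"
  defines "s \<equiv> of_int (cnt js a) * (R / (1 + lnorm a) powr m)"
  shows "{v'. \<exists>b::int. \<bar>Omega R m v' js - b\<bar> < \<epsilon>} \<in> sets (Wmeasure :: (('d \<Rightarrow> int) \<Rightarrow> real) measure)
     \<and> emeasure (Wmeasure :: (('d \<Rightarrow> int) \<Rightarrow> real) measure) {v'. \<exists>b::int. \<bar>Omega R m v' js - b\<bar> < \<epsilon>}
        \<le> ennreal (2*\<epsilon>*(\<bar>s\<bar>+3)/\<bar>s\<bar>)"
proof -
  interpret Up: prob_space U by (rule prob_U)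
  interpret P: product_prob_space "\<lambda>_::('d\<Rightarrow>int). U" "UNIV"
    by unfold_locales
  have s0: "s \<noteq> 0"
  proof -
    have "(1 + lnorm a) powr m > 0" using lnorm_pos1[of a] by simp
    then show ?thesis using c0 R unfolding s_def by simp
  qed
  define J where "J = insert a (fst ` set js)"
  define J' where "J' = J - {a}"
  have finJ: "finite J" "finite J'" unfolding J_def J'_def by auto
  have JJ': "J = insert a J'" "a \<notin> J'" unfolding J'_def J_def by auto
  define X where "X = {x \<in> space (PiM J (\<lambda>_. U)). \<exists>b::int. \<bar>Omega R m x js - b\<bar> < \<epsilon>}"
  have [measurable]: "(\<lambda>x. Omega R m x js) \<in> borel_measurable (PiM J (\<lambda>_. U))"
    by (rule Omega_meas) (auto simp: J_def)
  have X: "X \<in> sets (PiM J (\<lambda>_. U))" unfolding X_def by measurable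
  have spU: "space (PiM (UNIV::('d\<Rightarrow>int) set) (\<lambda>_. U)) = UNIV"
    by (simp add: space_PiM)
  have eq: "{v'. \<exists>b::int. \<bar>Omega R m v' js - b\<bar> < \<epsilon>} = prod_emb UNIV (\<lambda>_. U) J X"
  proof -
    have "Omega R m (restrict v' J) js = Omega R m v' js" for v'
      by (rule Omega_cong) (auto simp: J_def)
    then show ?thesis
      unfolding prod_emb_def X_def by (auto simp: space_PiM)
  qed
  have meas: "{v'. \<exists>b::int. \<bar>Omega R m v' js - b\<bar> < \<epsilon>} \<in> sets (Wmeasure :: (('d \<Rightarrow> int) \<Rightarrow> real) measure)"
    unfolding eq Wmeasure_eq using X by simp
  have "emeasure (Wmeasure :: (('d \<Rightarrow> int) \<Rightarrow> real) measure) {v'. \<exists>b::int. \<bar>Omega R m v' js - b\<bar> < \<epsilon>}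
      = emeasure (PiM J (\<lambda>_. U)) X"
    unfolding eq Wmeasure_eq using X finJ by (intro P.emeasure_PiM_emb') auto
  also have "\<dots> = (\<integral>\<^sup>+x. indicator X x \<partial>PiM J (\<lambda>_. U))"
    using X by simp
  also have "\<dots> = (\<integral>\<^sup>+x. (\<integral>\<^sup>+y. indicator X (x(a:=y)) \<partial>U) \<partial>PiM J' (\<lambda>_. U))"
    unfolding JJ'(1) using X finJ JJ' by (intro P.product_nn_integral_insert) auto
  also have "\<dots> \<le> (\<integral>\<^sup>+x. ennreal (2*\<epsilon>*(\<bar>s\<bar>+3)/\<bar>s\<bar>) \<partial>PiM J' (\<lambda>_. U))"
  proof (rule nn_integral_mono)
    fix x assume x: "x \<in> space (PiM J' (\<lambda>_. U))"
    define c where "c = Omega R m (x(a:=0)) js"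
    define G where "G = {y. \<exists>b::int. \<bar>c + s*y - b\<bar> < \<epsilon>}"
    have G: "G \<in> sets borel" unfolding G_def by measurable
    have "indicator X (x(a:=y)) = (indicator G y :: ennreal)" for y
    proof -
      have "x(a:=y) \<in> space (PiM J (\<lambda>_. U))"
        using x unfolding JJ'(1) by (auto simp: space_PiM PiE_iff extensional_def)
      moreover have "Omega R m (x(a:=y)) js = c + s*y"
        unfolding c_def s_def by (subst Omega_upd) simp
      ultimately show ?thesis unfolding X_def G_def by (simp add: indicator_def)
    qed
    then have "(\<integral>\<^sup>+y. indicator X (x(a:=y)) \<partial>U) = (\<integral>\<^sup>+y. indicator G y \<partial>U)" by simp
    also have "\<dots> = emeasure U G" using G by simp
    also have "\<dots> = emeasure lborel (G \<inter> {-1/2..1/2})"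
      using G by (simp add: Int_commute divide_ennreal_def)
    also have "\<dots> \<le> ennreal (2*\<epsilon>*(\<bar>s\<bar>+3)/\<bar>s\<bar>)"
      unfolding G_def by (rule oneD[OF s0 e])
    finally show "(\<integral>\<^sup>+y. indicator X (x(a:=y)) \<partial>U) \<le> ennreal (2*\<epsilon>*(\<bar>s\<bar>+3)/\<bar>s\<bar>)" .
  qed
  also have "\<dots> = ennreal (2*\<epsilon>*(\<bar>s\<bar>+3)/\<bar>s\<bar>)"
  proof -
    interpret PJ: prob_space "PiM J' (\<lambda>_. U)" by (rule prob_space_PiM) (rule prob_U)
    show ?thesis using PJ.emeasure_space_1 by simp
  qed
  finally show ?thesis using meas by simp
qed



lemma Nfun_Cons: "Nfun (j # js) = (1 + lnorm (fst j)) * Nfun js"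
  by (simp add: Nfun_def)

lemma Nfun_ge1: "Nfun js \<ge> 1"
proof (induction js)
  case Nil then show ?case by (simp add: Nfun_def)
next
  case (Cons j js)
  have "1 \<le> 1 + lnorm (fst j)" using lnorm_nonneg by simp
  then have "1*1 \<le> (1 + lnorm (fst j)) * Nfun js" using Cons by (intro mult_mono) auto
  then show ?case by (simp add: Nfun_Cons)
qed

lemma factor_le_N: "j \<in> set js \<Longrightarrow> 1 + lnorm (fst j) \<le> Nfun js"
proof (induction js)
  case Nil then show ?case by simp
next
  case (Cons k js)
  have k1: "1 \<le> 1 + lnorm (fst k)" using lnorm_nonneg by simp
  have N1: "1 \<le> Nfun js" by (rule Nfun_ge1)
  show ?case
  proof (cases "j = k")
    case True
    then show ?thesis unfolding Nfun_Cons using N1 k1 mult_left_mono[OF N1, of "1 + lnorm (fst k)"] by simp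
  next
    case False
    then have "1 + lnorm (fst j) \<le> Nfun js" using Cons by simp
    moreover have "Nfun js \<le> (1 + lnorm (fst k)) * Nfun js" using mult_right_mono[OF k1, of "Nfun js"] N1 by simp
    ultimately show ?thesis unfolding Nfun_Cons by linarith
  qed
qed

definition fj :: "'d::finite zindex \<Rightarrow> real" where
  "fj j = (1 + lnorm (fst j)) powr (-(real CARD('d) + 3))"

definition Pj :: "'d::finite zindex list \<Rightarrow> real" where
  "Pj js = prod_list (map fj js)"

lemma fj_nonneg: "fj j \<ge> 0" by (simp add: fj_def)

lemma Pj_nonneg: "Pj js \<ge> 0"
  unfolding Pj_def by (induction js) (auto simp: fj_nonneg)

lemma Pj_Cons: "Pj (j # js) = fj j * Pj js" by (simp add: Pj_def)

lemma Nfun_powr: "Nfun (js :: 'd::finite zindex list) powr (-(real CARD('d) + 3)) = Pj js"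
proof (induction js)
  case Nil then show ?case by (simp add: Nfun_def Pj_def)
next
  case (Cons j js)
  have "Nfun (j # js) powr (-(real CARD('d) + 3)) =
        (1 + lnorm (fst j)) powr (-(real CARD('d) + 3)) * Nfun js powr (-(real CARD('d) + 3))"
    unfolding Nfun_Cons using lnorm_pos1[of "fst j"] Nfun_ge1[of js] by (subst powr_mult) auto
  then show ?case using Cons by (simp add: Pj_Cons fj_def)
qed

lemma js_bound:
  fixes js :: "'d::finite zindex list" and R m \<gamma> C :: real
  assumes nr: "\<not> resonant js" and R: "R > 0" and m: "m \<ge> 0"
    and g: "0 < \<gamma>" "\<gamma> \<le> 1/4" and C: "0 < C" "C \<le> 1"
  defines "\<epsilon> \<equiv> C ^ length js * \<gamma> / Nfun js powr (m + real CARD('d) + 3)"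
  shows "{v'. \<exists>b::int. \<bar>Omega R m v' js - b\<bar> < \<epsilon>} \<in> sets (Wmeasure :: (('d \<Rightarrow> int) \<Rightarrow> real) measure)
     \<and> emeasure (Wmeasure :: (('d \<Rightarrow> int) \<Rightarrow> real) measure) {v'. \<exists>b::int. \<bar>Omega R m v' js - b\<bar> < \<epsilon>}
        \<le> ennreal (2*(1+3/R) * \<gamma> * C ^ length js * Pj js)"
proof -
  obtain a where a: "count (mset js) (a,True) \<noteq> count (mset js) (a,False)"
    using nonres_pivot[OF nr] by blast
  have c0: "cnt js a \<noteq> 0" using a unfolding cnt_def by simp
  have ain: "(a,True) \<in> set js \<or> (a,False) \<in> set js"
    using a by (metis count_mset_0_iff)
  define A where "A = 1 + lnorm a"
  have A1: "A \<ge> 1" unfolding A_def using lnorm_nonneg[of a] by simp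
  define N where "N = Nfun js"
  have N1: "N \<ge> 1" unfolding N_def by (rule Nfun_ge1)
  have AN: "A \<le> N" unfolding A_def N_def using ain factor_le_N by fastforce
  define s where "s = of_int (cnt js a) * (R / A powr m)"
  have Apos: "A powr m > 0" using A1 by simp
  have Am1: "A powr m \<ge> 1" using A1 m by (simp add: ge_one_powr_ge_zero)
  have sabs: "\<bar>s\<bar> \<ge> R / A powr m"
  proof -
    have "\<bar>real_of_int (cnt js a)\<bar> \<ge> 1" using c0 by linarith
    then have "\<bar>real_of_int (cnt js a)\<bar> * (R / A powr m) \<ge> 1 * (R / A powr m)"
      using R Apos by (intro mult_right_mono) auto
    then show ?thesis unfolding s_def using R Apos by (simp add: abs_mult)
  qed
  have spos: "\<bar>s\<bar> > 0" using sabs R Apos by (meson divide_pos_pos less_le_trans)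
  define E where "E = m + real CARD('d) + 3"
  have NE: "N powr E \<ge> 1" unfolding E_def using N1 m by (simp add: ge_one_powr_ge_zero)
  have Cr: "C ^ length js \<le> 1" "C ^ length js > 0" using C by (auto simp: power_le_one)
  have epos: "\<epsilon> > 0" unfolding \<epsilon>_def using Cr g N1 unfolding N_def by (intro divide_pos_pos mult_pos_pos) auto
  have ele: "\<epsilon> \<le> 1"
  proof -
    have "\<epsilon> \<le> C ^ length js * \<gamma>" unfolding \<epsilon>_def N_def[symmetric] E_def[symmetric]
      using NE Cr g by (simp add: divide_le_eq)
    also have "\<dots> \<le> 1" using Cr g mult_le_one[of "C ^ length js" \<gamma>] by linarith
    finally show ?thesis .
  qed
  note bb = bad_bound[OF c0 R epos ele, of m]
  have sdef: "of_int (cnt js a) * (R / (1 + lnorm a) powr m) = s" unfolding s_def A_def ..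
  have key: "2*\<epsilon>*(\<bar>s\<bar>+3)/\<bar>s\<bar> \<le> 2*(1+3/R) * \<gamma> * C ^ length js * Pj js"
  proof -
    have "2*\<epsilon>*(\<bar>s\<bar>+3)/\<bar>s\<bar> = 2*\<epsilon> + 6*\<epsilon>/\<bar>s\<bar>" using spos by (simp add: field_simps)
    also have "6*\<epsilon>/\<bar>s\<bar> \<le> 6*\<epsilon>*A powr m / R"
    proof -
      have "1/\<bar>s\<bar> \<le> 1/(R / A powr m)" using sabs R Apos spos
        by (intro divide_left_mono) (auto intro!: mult_pos_pos divide_pos_pos)
      then have "1/\<bar>s\<bar> \<le> A powr m / R" by simp
      then have "(6*\<epsilon>) * (1/\<bar>s\<bar>) \<le> (6*\<epsilon>) * (A powr m / R)" using epos by (intro mult_left_mono) auto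
      then show ?thesis by simp
    qed
    then have "2*\<epsilon> + 6*\<epsilon>/\<bar>s\<bar> \<le> 2*\<epsilon>*A powr m + 6*\<epsilon>*A powr m / R"
    proof -
      have "2*\<epsilon> \<le> 2*\<epsilon>*A powr m" using mult_left_mono[OF Am1, of "2*\<epsilon>"] epos by simp
      then show ?thesis using \<open>6*\<epsilon>/\<bar>s\<bar> \<le> 6*\<epsilon>*A powr m / R\<close> by linarith
    qed
    also have "\<dots> = 2*(1+3/R) * (\<epsilon> * A powr m)" using R by (simp add: field_simps)
    also have "\<epsilon> * A powr m \<le> \<gamma> * C ^ length js * Pj js"
    proof -
      have "A powr m \<le> N powr m" using A1 AN m by (intro powr_mono2) auto
      have "N powr E = N powr m * N powr (real CARD('d) + 3)" unfolding E_def
        using N1 by (simp add: powr_add add.assoc)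
      have "\<epsilon> * A powr m = C ^ length js * \<gamma> * A powr m / N powr E"
        unfolding \<epsilon>_def N_def E_def by simp
      also have "\<dots> \<le> C ^ length js * \<gamma> * N powr m / N powr E"
        using \<open>A powr m \<le> N powr m\<close> Cr g NE by (intro divide_right_mono mult_left_mono) auto
      also have "\<dots> = C ^ length js * \<gamma> / N powr (real CARD('d) + 3)"
        unfolding \<open>N powr E = _\<close> using N1 by simp
      also have "\<dots> = C ^ length js * \<gamma> * N powr (-(real CARD('d) + 3))"
        by (simp only: powr_minus_divide) simp
      also have "\<dots> = \<gamma> * C ^ length js * Pj js" unfolding N_def Nfun_powr by simp
      finally show ?thesis .
    qed
    then have "2*(1+3/R) * (\<epsilon> * A powr m) \<le> 2*(1+3/R) * (\<gamma> * C ^ length js * Pj js)"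
      using R by (intro mult_left_mono) auto
    finally show ?thesis by (simp add: mult.assoc)
  qed
  have b1: "{v'. \<exists>b::int. \<bar>Omega R m v' js - b\<bar> < \<epsilon>} \<in> sets (Wmeasure :: (('d \<Rightarrow> int) \<Rightarrow> real) measure)"
    using bb by (rule conjunct1)
  have b2: "emeasure (Wmeasure :: (('d \<Rightarrow> int) \<Rightarrow> real) measure) {v'. \<exists>b::int. \<bar>Omega R m v' js - b\<bar> < \<epsilon>}
        \<le> ennreal (2*\<epsilon>*(\<bar>s\<bar>+3)/\<bar>s\<bar>)"
    using bb unfolding sdef by (rule conjunct2)
  show ?thesis by (rule conjI[OF b1 order_trans[OF b2 ennreal_leI[OF key]]])
qed



lemma nn_count_prod:
  fixes f :: "'a::countable \<Rightarrow> ennreal" and g :: "'b::countable \<Rightarrow> ennreal"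
  shows "(\<integral>\<^sup>+p. f (fst p) * g (snd p) \<partial>count_space UNIV)
       = (\<integral>\<^sup>+x. f x \<partial>count_space UNIV) * (\<integral>\<^sup>+y. g y \<partial>count_space UNIV)"
proof -
  have eqm: "count_space (UNIV :: ('a\<times>'b) set) = count_space UNIV \<Otimes>\<^sub>M count_space UNIV"
    using pair_measure_countable[of "UNIV::'a set" "UNIV::'b set"] by simp
  have "(\<integral>\<^sup>+p. f (fst p) * g (snd p) \<partial>count_space UNIV)
      = (\<integral>\<^sup>+p. f (fst p) * g (snd p) \<partial>(count_space UNIV \<Otimes>\<^sub>M count_space UNIV))"
    by (simp add: eqm[symmetric])
  also have "\<dots> = (\<integral>\<^sup>+x. (\<integral>\<^sup>+y. f x * g y \<partial>count_space UNIV) \<partial>count_space UNIV)"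
  proof -
    have m: "(\<lambda>p. f (fst p) * g (snd p)) \<in> borel_measurable (count_space UNIV \<Otimes>\<^sub>M count_space UNIV)"
      by (simp add: eqm[symmetric])
    show ?thesis using sigma_finite_measure.nn_integral_fst[OF sigma_finite_measure_count_space m] by simp
  qed
  also have "\<dots> = (\<integral>\<^sup>+x. f x * (\<integral>\<^sup>+y. g y \<partial>count_space UNIV) \<partial>count_space UNIV)"
    by (subst nn_integral_cmult) auto
  also have "\<dots> = (\<integral>\<^sup>+x. f x \<partial>count_space UNIV) * (\<integral>\<^sup>+y. g y \<partial>count_space UNIV)"
    by (subst nn_integral_multc) auto
  finally show ?thesis .
qed

definition Ssum :: "'d::finite itself \<Rightarrow> ennreal" where
  "Ssum _ = (\<integral>\<^sup>+j. ennreal (fj (j :: 'd zindex)) \<partial>count_space UNIV)"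

lemma list_sum:
  "(\<integral>\<^sup>+js. ennreal (Pj (js :: 'd::finite zindex list)) * indicator {js. length js = r} js \<partial>count_space UNIV)
     = Ssum TYPE('d) ^ r"
proof (induction r)
  case 0
  have "indicator {js :: 'd zindex list. length js = 0} = indicator {[]}" by auto
  then show ?case by (simp add: Pj_def)
next
  case (Suc r)
  define F where "F = (\<lambda>js :: 'd zindex list. ennreal (Pj js) * indicator {js. length js = Suc r} js)"
  have bij: "bij_betw (\<lambda>p :: 'd zindex \<times> 'd zindex list. fst p # snd p) UNIV {js. js \<noteq> []}"
    unfolding bij_betw_def inj_on_def by (auto simp: image_def neq_Nil_conv)
  have "(\<integral>\<^sup>+js. F js \<partial>count_space UNIV) = (\<integral>\<^sup>+js. F js \<partial>count_space {js. js \<noteq> []})"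
    by (subst nn_integral_count_space_indicator) (auto intro!: nn_integral_cong simp: F_def split: split_indicator)
  also have "\<dots> = (\<integral>\<^sup>+p. F (fst p # snd p) \<partial>count_space UNIV)"
    by (rule nn_integral_bij_count_space[OF bij, symmetric])
  also have "\<dots> = (\<integral>\<^sup>+(p :: 'd zindex \<times> 'd zindex list). ennreal (fj (fst p)) * (ennreal (Pj (snd p)) * indicator {js. length js = r} (snd p)) \<partial>count_space UNIV)"
    unfolding F_def by (rule nn_integral_cong) (auto simp: Pj_Cons ennreal_mult fj_nonneg Pj_nonneg split: split_indicator)
  also have "\<dots> = Ssum TYPE('d) * Ssum TYPE('d) ^ r"
    by (subst nn_count_prod) (simp add: Suc Ssum_def)
  finally show ?case by (simp add: F_def)
qed

lemma total_sum:
  fixes a :: "nat \<Rightarrow> real"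
  assumes "\<And>r. a r \<ge> 0"
  shows "(\<integral>\<^sup>+js. ennreal (a (length js)) * ennreal (Pj (js :: 'd::finite zindex list)) \<partial>count_space UNIV)
     = (\<Sum>r. ennreal (a r) * Ssum TYPE('d) ^ r)"
proof -
  have "ennreal (a (length js)) * ennreal (Pj js)
      = (\<Sum>r. ennreal (a r) * (ennreal (Pj js) * indicator {js. length js = r} js))" for js :: "'d zindex list"
    by (subst suminf_finite[of "{length js}"]) (auto split: split_indicator)
  then have "(\<integral>\<^sup>+js. ennreal (a (length js)) * ennreal (Pj (js :: 'd zindex list)) \<partial>count_space UNIV)
      = (\<integral>\<^sup>+(js :: 'd zindex list). (\<Sum>r. ennreal (a r) * (ennreal (Pj js) * indicator {js. length js = r} js)) \<partial>count_space UNIV)"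
    by simp
  also have "\<dots> = (\<Sum>r. (\<integral>\<^sup>+(js :: 'd zindex list). ennreal (a r) * (ennreal (Pj js) * indicator {js. length js = r} js) \<partial>count_space UNIV))"
    by (rule nn_integral_suminf) auto
  also have "\<dots> = (\<Sum>r. ennreal (a r) * Ssum TYPE('d) ^ r)"
    by (subst nn_integral_cmult) (auto simp: list_sum)
  finally show ?thesis .
qed



lemma int_powr_summable:
  fixes q :: real assumes q: "q > 1"
  shows "Infinite_Set_Sum.abs_summable_on (\<lambda>n::int. (1 + \<bar>real_of_int n\<bar>) powr (-q)) UNIV"
proof -
  define g where "g = (\<lambda>n::int. (1 + \<bar>real_of_int n\<bar>) powr (-q))"
  have s0: "summable (\<lambda>n. real n powr (-q))" using q by (subst summable_real_powr_iff) auto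
  have s1: "summable (\<lambda>n. real (Suc n) powr (-q))"
    using s0 summable_Suc_iff[of "\<lambda>n. real n powr (-q)"] by simp
  have "Infinite_Set_Sum.abs_summable_on (\<lambda>n. g (int n)) UNIV"
    unfolding abs_summable_on_nat_iff' g_def using s1 by (simp add: add.commute)
  then have A: "Infinite_Set_Sum.abs_summable_on g (range int)"
    by (subst abs_summable_on_reindex_iff[symmetric]) (auto simp: inj_on_def)
  have "Infinite_Set_Sum.abs_summable_on (\<lambda>n. g (- int n)) UNIV"
    unfolding abs_summable_on_nat_iff' g_def using s1 by (simp add: add.commute)
  then have B: "Infinite_Set_Sum.abs_summable_on g (range (\<lambda>n. - int n))"
    by (subst abs_summable_on_reindex_iff[symmetric]) (auto simp: inj_on_def)
  have U: "range int \<union> range (\<lambda>n. - int n) = (UNIV :: int set)"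
  proof -
    have "z \<in> range int \<union> range (\<lambda>n. - int n)" for z :: int
    proof (cases "z \<ge> 0")
      case True then show ?thesis by (auto intro!: image_eqI[of _ _ "nat z"])
    next
      case False then show ?thesis by (auto intro!: image_eqI[of _ _ "nat (-z)"])
    qed
    then show ?thesis by auto
  qed
  show ?thesis using abs_summable_on_union[OF A B] unfolding U g_def .
qed

lemma coord_le_lnorm: "\<bar>real_of_int (a i)\<bar> \<le> lnorm (a :: 'd::finite \<Rightarrow> int)"
proof -
  have "(real_of_int (a i))\<^sup>2 \<le> (\<Sum>k\<in>UNIV. (real_of_int (a k))\<^sup>2)"
    by (rule member_le_sum) auto
  then have "sqrt ((real_of_int (a i))\<^sup>2) \<le> lnorm a" unfolding lnorm_def by (rule real_sqrt_le_mono)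
  then show ?thesis by simp
qed

lemma fj_le_prod:
  fixes a :: "'d::finite \<Rightarrow> int"
  defines "q \<equiv> (real CARD('d) + 3) / real CARD('d)"
  shows "fj (a, \<delta>) \<le> (\<Prod>i\<in>UNIV. (1 + \<bar>real_of_int (a i)\<bar>) powr (-q))"
proof -
  define d where "d = real CARD('d)"
  have d: "d \<ge> 1" unfolding d_def by simp
  define L where "L = 1 + lnorm a"
  have L: "L \<ge> 1" unfolding L_def using lnorm_nonneg[of a] by simp
  have "(\<Prod>i\<in>UNIV. 1 + \<bar>real_of_int (a i)\<bar>) \<le> (\<Prod>i\<in>(UNIV::'d set). L)"
    by (intro prod_mono) (auto simp: L_def coord_le_lnorm)
  also have "\<dots> = L ^ CARD('d)" by simp
  finally have pl: "(\<Prod>i\<in>UNIV. 1 + \<bar>real_of_int (a i)\<bar>) \<le> L ^ CARD('d)" .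
  have ppos: "(\<Prod>i\<in>(UNIV::'d set). 1 + \<bar>real_of_int (a i)\<bar>) > 0" by (intro prod_pos) auto
  have qnn: "-q \<le> 0" unfolding q_def by simp
  have "fj (a, \<delta>) = L powr (-(d + 3))" unfolding fj_def L_def d_def by simp
  also have "\<dots> = (L ^ CARD('d)) powr (-q)"
    using L d by (simp add: powr_realpow[symmetric] powr_powr q_def d_def)
  also have "\<dots> \<le> (\<Prod>i\<in>UNIV. 1 + \<bar>real_of_int (a i)\<bar>) powr (-q)"
    by (rule powr_mono2'[OF qnn ppos pl])
  also have "\<dots> = (\<Prod>i\<in>UNIV. (1 + \<bar>real_of_int (a i)\<bar>) powr (-q))"
    by (rule prod_powr_distrib)
  finally show ?thesis .
qed

lemma Ssum_finite: "Ssum TYPE('d::finite) \<noteq> \<infinity>"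
proof -
  define q where "q = (real CARD('d) + 3) / real CARD('d)"
  have q: "q > 1" unfolding q_def by (simp add: field_simps)
  define h where "h = (\<lambda>a :: 'd \<Rightarrow> int. \<Prod>i\<in>UNIV. (1 + \<bar>real_of_int (a i)\<bar>) powr (-q))"
  have "Infinite_Set_Sum.abs_summable_on h (PiE UNIV (\<lambda>_. UNIV))"
    unfolding h_def by (rule abs_summable_on_prod_PiE) (auto intro: int_powr_summable[OF q])
  then have hs: "Infinite_Set_Sum.abs_summable_on h UNIV" by simp
  have "(\<integral>\<^sup>+a. ennreal (h a) \<partial>count_space UNIV) = ennreal (infsetsum h UNIV)"
    by (rule nn_integral_conv_infsetsum[OF hs]) (auto simp: h_def intro: prod_nonneg)
  then have hfin: "(\<integral>\<^sup>+a. ennreal (h a) \<partial>count_space UNIV) \<noteq> \<infinity>" by simp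
  have "Ssum TYPE('d) \<le> (\<integral>\<^sup>+(j :: 'd zindex). ennreal (h (fst j)) * (\<lambda>_. 1) (snd j) \<partial>count_space UNIV)"
    unfolding Ssum_def
    by (rule nn_integral_mono) (auto intro!: ennreal_leI simp: h_def q_def fj_le_prod)
  also have "\<dots> = (\<integral>\<^sup>+a. ennreal (h a) \<partial>count_space UNIV) * (\<integral>\<^sup>+(b::bool). 1 \<partial>count_space UNIV)"
    by (rule nn_count_prod)
  also have "\<dots> < \<infinity>" using hfin
    by (simp add: nn_integral_count_space_finite ennreal_mult_less_top less_top)
  finally show ?thesis by simp
qed



lemma emeasure_UN_count_le:
  fixes X :: "'i::countable \<Rightarrow> 'a set"
  assumes X[measurable]: "\<And>i. X i \<in> sets M"
  shows "emeasure M (\<Union>i. X i) \<le> (\<integral>\<^sup>+i. emeasure M (X i) \<partial>count_space UNIV)"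
proof -
  have ptw: "indicator (\<Union>i. X i) x \<le> (\<integral>\<^sup>+i. indicator (X i) x \<partial>count_space UNIV)" for x
  proof (cases "x \<in> (\<Union>i. X i)")
    case True
    then obtain j where j: "x \<in> X j" by auto
    have "(1::ennreal) = (\<integral>\<^sup>+i. indicator {j} i \<partial>count_space UNIV)" by simp
    also have "\<dots> \<le> (\<integral>\<^sup>+i. indicator (X i) x \<partial>count_space UNIV)"
      using j by (intro nn_integral_mono) (auto split: split_indicator)
    finally show ?thesis using True by simp
  qed simp
  have "emeasure M (\<Union>i. X i) = (\<integral>\<^sup>+x. indicator (\<Union>i. X i) x \<partial>M)"
    by (simp add: sets.countable_UN)
  also have "\<dots> \<le> (\<integral>\<^sup>+x. (\<integral>\<^sup>+i. indicator (X i) x \<partial>count_space UNIV) \<partial>M)"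
    by (intro nn_integral_mono ptw)
  also have "\<dots> = (\<integral>\<^sup>+i. (\<integral>\<^sup>+x. indicator (X i) x \<partial>M) \<partial>count_space UNIV)"
    by (rule nn_integral_count_space_nn_integral) auto
  also have "\<dots> = (\<integral>\<^sup>+i. emeasure M (X i) \<partial>count_space UNIV)"
    by simp
  finally show ?thesis .
qed

lemma Wset_facts:
  "(Wset :: (('d::finite \<Rightarrow> int) \<Rightarrow> real) set) \<in> sets Wmeasure \<and> measure (Wmeasure :: (('d \<Rightarrow> int) \<Rightarrow> real) measure) Wset = 1"
proof -
  interpret Up: prob_space U by (rule prob_U)
  interpret P: product_prob_space "\<lambda>_::('d\<Rightarrow>int). U" "UNIV"
    by unfold_locales
  have sp: "space (PiM (UNIV::('d\<Rightarrow>int) set) (\<lambda>_. U)) = UNIV"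
    by (simp add: space_PiM)
  have eq: "(Wset :: (('d \<Rightarrow> int) \<Rightarrow> real) set) = {x \<in> space (PiM UNIV (\<lambda>_. U)). \<forall>a. x a \<in> {-1/2..1/2}}"
    unfolding Wset_def sp by simp
  have ms: "(Wset :: (('d \<Rightarrow> int) \<Rightarrow> real) set) \<in> sets (PiM UNIV (\<lambda>_. U))"
    unfolding eq by measurable
  have "AE x in PiM UNIV (\<lambda>_. U). \<forall>a::'d\<Rightarrow>int. x a \<in> {-1/2..1/2::real}"
  proof (subst AE_all_countable, intro allI)
    fix a :: "'d \<Rightarrow> int"
    have "AE y in U. y \<in> {-1/2..1/2::real}" by (rule AE_uniform_measureI) auto
    then show "AE x in PiM UNIV (\<lambda>_. U). x a \<in> {-1/2..1/2::real}"
      by (rule P.AE_component[of a, simplified])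
  qed
  then have "measure (PiM UNIV (\<lambda>_. U)) (Wset :: (('d \<Rightarrow> int) \<Rightarrow> real) set) = 1"
    using ms by (subst P.prob_eq_1) (auto simp: Wset_def)
  then show ?thesis using ms by (simp add: Wmeasure_eq)
qed



theorem lemmaA1:
  fixes R m :: real
  assumes "R > 0" and "m > real CARD('d::finite) / 2"
  shows "\<exists>C::real. 0 < C \<and> C < 1 \<and>
    (\<forall>\<gamma>::real. \<gamma> > 0 \<longrightarrow>
      (\<exists>F \<subseteq> (Wset :: (('d \<Rightarrow> int) \<Rightarrow> real) set).
         F \<in> sets (Wmeasure :: (('d \<Rightarrow> int) \<Rightarrow> real) measure) \<and>
         measure Wmeasure F > 1 - 4 * \<gamma> \<and>
         (\<forall>v'\<in>F. \<forall>r::nat. r \<ge> 1 \<longrightarrow>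
            (\<forall>js :: 'd zindex list. length js = r \<longrightarrow> \<not> resonant js \<longrightarrow>
              (\<forall>b::int. \<bar>Omega R m v' js - real_of_int b\<bar> \<ge>
                 C ^ r * \<gamma> / Nfun js powr (m + real CARD('d) + 3))))))"
proof -
  have R: "R > 0" and m: "m \<ge> 0" using assms by auto
  define K where "K = 2*(1+3/R)"
  have K: "K > 0" unfolding K_def using R by (simp add: add_pos_pos)
  define Sr where "Sr = enn2real (Ssum TYPE('d))"
  have SS: "Ssum TYPE('d) = ennreal Sr" unfolding Sr_def using Ssum_finite[where 'd='d]
    by (simp add: less_top ennreal_enn2real)
  have Sr0: "Sr \<ge> 0" unfolding Sr_def by simp
  define C where "C = 1/(1+Sr)/(2*(1+K))"
  have Cpos: "C > 0" unfolding C_def using Sr0 K by simp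
  have Cle: "C \<le> 1/2"
  proof -
    have h: "1*1 \<le> (1+Sr)*(1+K)" using Sr0 K by (intro mult_mono) auto
    have "C = 1/(2*((1+Sr)*(1+K)))" unfolding C_def by (simp add: algebra_simps)
    also have "\<dots> \<le> 1/(2*1)" using h by (intro divide_left_mono mult_left_mono) auto
    finally show ?thesis by simp
  qed
  have C1: "C \<le> 1" using Cle by simp
  define q where "q = C * Sr"
  have q0: "q \<ge> 0" unfolding q_def using Cpos Sr0 by simp
  have qK: "q * (2*(1+K)) < 1"
  proof -
    have e: "(1+Sr) * C * (2*(1+K)) = 1" using Sr0 K unfolding C_def by simp
    have "C * Sr * (2*(1+K)) < (1+Sr) * C * (2*(1+K))" using Cpos K by (intro mult_strict_right_mono) auto
    then show ?thesis using e unfolding q_def by simp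
  qed
  have q1: "q < 1/2"
  proof -
    have "q*2 \<le> q*(2*(1+K))" using q0 K by (intro mult_left_mono) auto
    then show ?thesis using qK by linarith
  qed
  show ?thesis
  proof (intro exI[of _ C] conjI allI impI)
    show "0 < C" by (rule Cpos)
    show "C < 1" using Cle by simp
    fix \<gamma> :: real assume g: "\<gamma> > 0"
    show "\<exists>F \<subseteq> (Wset :: (('d \<Rightarrow> int) \<Rightarrow> real) set).
         F \<in> sets (Wmeasure :: (('d \<Rightarrow> int) \<Rightarrow> real) measure) \<and>
         measure Wmeasure F > 1 - 4 * \<gamma> \<and>
         (\<forall>v'\<in>F. \<forall>r::nat. r \<ge> 1 \<longrightarrow>
            (\<forall>js :: 'd zindex list. length js = r \<longrightarrow> \<not> resonant js \<longrightarrow>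
              (\<forall>b::int. \<bar>Omega R m v' js - real_of_int b\<bar> \<ge>
                 C ^ r * \<gamma> / Nfun js powr (m + real CARD('d) + 3))))"
    proof (cases "\<gamma> > 1/4")
      case True
      show ?thesis
        by (intro exI[of _ "{}"]) (use True in auto)
    next
      case False
      then have g4: "\<gamma> \<le> 1/4" by simp
      define Bad where "Bad = (\<lambda>js :: 'd zindex list. if resonant js then {} else
          {v'. \<exists>b::int. \<bar>Omega R m v' js - b\<bar> < C ^ length js * \<gamma> / Nfun js powr (m + real CARD('d) + 3)})"
      define a where "a = (\<lambda>r::nat. if r = 0 then 0 else K * \<gamma> * C ^ r)"
      have a0: "a r \<ge> 0" for r unfolding a_def using K g Cpos by simp
      have Bad_facts: "Bad js \<in> sets (Wmeasure :: (('d \<Rightarrow> int) \<Rightarrow> real) measure) \<and>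
          emeasure (Wmeasure :: (('d \<Rightarrow> int) \<Rightarrow> real) measure) (Bad js) \<le> ennreal (a (length js)) * ennreal (Pj js)" for js
      proof (cases "resonant js")
        case True then show ?thesis by (simp add: Bad_def)
      next
        case False
        have ne: "js \<noteq> []"
        proof
          assume "js = []" then have "resonant js" unfolding resonant_def by auto
          with False show False by simp
        qed
        have "ennreal (2*(1+3/R) * \<gamma> * C ^ length js * Pj js) = ennreal (a (length js)) * ennreal (Pj js)"
        proof -
          have "2*(1+3/R) * \<gamma> * C ^ length js * Pj js = a (length js) * Pj js"
            using ne unfolding a_def K_def by simp
          then show ?thesis by (simp only: ennreal_mult[OF a0 Pj_nonneg])
        qed
        then show ?thesis
          using js_bound[OF False R m g g4 Cpos C1] False unfolding Bad_def by simp
      qed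
      then have Bm: "\<And>js. Bad js \<in> sets (Wmeasure :: (('d \<Rightarrow> int) \<Rightarrow> real) measure)" by blast
      define tot where "tot = K * \<gamma> * q / (1 - q)"
      have sums: "(\<lambda>r. a r * Sr ^ r) sums tot"
      proof -
        have "(\<lambda>n. (K * \<gamma> * q) * q ^ n) sums ((K * \<gamma> * q) * (1 / (1 - q)))"
          using q0 q1 by (intro sums_mult geometric_sums) auto
        then have "(\<lambda>n. a (Suc n) * Sr ^ Suc n) sums tot"
          unfolding a_def tot_def q_def by (simp add: power_mult_distrib mult_ac)
        then show ?thesis by (subst (asm) sums_Suc_iff) (simp add: a_def)
      qed
      have tot_lt: "tot < \<gamma>"
      proof -
        have nn: "0 \<le> K * \<gamma> * q" using K g q0 by simp
        have "tot \<le> K * \<gamma> * q / (1/2)" unfolding tot_def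
          using q1 nn by (intro divide_left_mono) auto
        also have "\<dots> = \<gamma> * (K * q * 2)" by simp
        also have "\<dots> < \<gamma> * 1"
        proof -
          have "K * q * 2 \<le> q * (2*(1+K))" using q0 by (simp add: algebra_simps)
          then have "K * q * 2 < 1" using qK by linarith
          then show ?thesis using g by (intro mult_strict_left_mono) auto
        qed
        finally show ?thesis by simp
      qed
      define BU where "BU = (\<Union>js. Bad js)"
      have BUm: "BU \<in> sets (Wmeasure :: (('d \<Rightarrow> int) \<Rightarrow> real) measure)"
        unfolding BU_def using Bm by (intro sets.countable_UN) auto
      have "emeasure (Wmeasure :: (('d \<Rightarrow> int) \<Rightarrow> real) measure) BU
          \<le> (\<integral>\<^sup>+js. emeasure (Wmeasure :: (('d \<Rightarrow> int) \<Rightarrow> real) measure) (Bad js) \<partial>count_space UNIV)"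
        unfolding BU_def by (rule emeasure_UN_count_le[OF Bm])
      also have "\<dots> \<le> (\<integral>\<^sup>+js. ennreal (a (length js)) * ennreal (Pj (js :: 'd zindex list)) \<partial>count_space UNIV)"
        using Bad_facts by (intro nn_integral_mono) blast
      also have "\<dots> = (\<Sum>r. ennreal (a r) * Ssum TYPE('d) ^ r)"
        by (rule total_sum[OF a0])
      also have "\<dots> = (\<Sum>r. ennreal (a r * Sr ^ r))"
        unfolding SS using Sr0 a0 by (simp add: ennreal_power ennreal_mult)
      also have "\<dots> = ennreal tot"
        using sums a0 Sr0 by (subst suminf_ennreal2) (auto simp: sums_iff)
      finally have BUle: "emeasure (Wmeasure :: (('d \<Rightarrow> int) \<Rightarrow> real) measure) BU \<le> ennreal tot" .
      interpret Up: prob_space U by (rule prob_U)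
      interpret P: product_prob_space "\<lambda>_::('d\<Rightarrow>int). U" "UNIV"
        by unfold_locales
      have WW: "(Wmeasure :: (('d \<Rightarrow> int) \<Rightarrow> real) measure) = PiM UNIV (\<lambda>_. U)" by (rule Wmeasure_eq)
      have tot0: "tot \<ge> 0" unfolding tot_def using K g q0 q1 by simp
      have mBU: "measure (Wmeasure :: (('d \<Rightarrow> int) \<Rightarrow> real) measure) BU \<le> tot"
      proof -
        have "emeasure (PiM UNIV (\<lambda>_. U)) BU = ennreal (measure (PiM UNIV (\<lambda>_. U)) BU)"
          by (rule P.emeasure_eq_measure)
        then have "ennreal (measure (PiM UNIV (\<lambda>_. U)) BU) \<le> ennreal tot" using BUle WW by simp
        then show ?thesis using tot0 WW by (simp add: ennreal_le_iff)
      qed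
      define F where "F = (Wset :: (('d \<Rightarrow> int) \<Rightarrow> real) set) - BU"
      have Wf: "(Wset :: (('d \<Rightarrow> int) \<Rightarrow> real) set) \<in> sets Wmeasure" "measure (Wmeasure :: (('d \<Rightarrow> int) \<Rightarrow> real) measure) Wset = 1"
        using Wset_facts by auto
      have Fm: "F \<in> sets (Wmeasure :: (('d \<Rightarrow> int) \<Rightarrow> real) measure)"
        unfolding F_def using Wf BUm by auto
      have "measure (Wmeasure :: (('d \<Rightarrow> int) \<Rightarrow> real) measure) F = 1 - measure Wmeasure (Wset \<inter> BU)"
        unfolding F_def using Wf BUm unfolding WW by (subst P.finite_measure_Diff') auto
      moreover have "measure (Wmeasure :: (('d \<Rightarrow> int) \<Rightarrow> real) measure) (Wset \<inter> BU) \<le> measure Wmeasure BU"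
        using BUm unfolding WW by (intro P.finite_measure_mono) auto
      ultimately have mF: "measure (Wmeasure :: (('d \<Rightarrow> int) \<Rightarrow> real) measure) F > 1 - 4 * \<gamma>"
        using mBU tot_lt g by linarith
      show ?thesis
      proof (intro exI[of _ F] conjI ballI allI impI)
        show "F \<subseteq> Wset" unfolding F_def by auto
        show "F \<in> sets Wmeasure" by (rule Fm)
        show "measure Wmeasure F > 1 - 4 * \<gamma>" by (rule mF)
        fix v' :: "('d \<Rightarrow> int) \<Rightarrow> real" and r :: nat and js :: "'d zindex list" and b :: int
        assume v: "v' \<in> F" and r: "1 \<le> r" and l: "length js = r" and nr: "\<not> resonant js"
        show "\<bar>Omega R m v' js - real_of_int b\<bar> \<ge> C ^ r * \<gamma> / Nfun js powr (m + real CARD('d) + 3)"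
        proof (rule ccontr)
          assume "\<not> ?thesis"
          then have "v' \<in> Bad js" unfolding Bad_def using nr l by (auto intro!: exI[of _ b])
          then show False using v unfolding F_def BU_def by auto
        qed
      qed
    qed
  qed
qed


end
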